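(* Let $P,P'\subset\mathbb{R}^d$ be polytopes, each inscribed into a sphere centered at the origin, with the same normal fan $\mathcal{N}(P)=\mathcal{N}(P')$. If some point $v$ is a vertex of both $P$ and $P'$ with the same normal cone $N_vP=N_vP'$, then $P=P'$. That is, an inscribed polytope with inscribing sphere centered at the origin is completely determined by its normal fan and a single vertex.
   Context: For a polytope $P$ and $c\in\mathbb{R}^d$, $P^c$ is the face maximizing $\langle c,x\rangle$. The normal cone of a face $F$ is $N_FP=\{c: F\subseteq P^c\}$; the normal fan $\mathcal{N}(P)$ is the collection of all normal cones of faces of $P$. *)

theory Defs
  imports "HOL-Analysis.Analysis"
begin

definition max_face :: "'a::euclidean_space set \<Rightarrow> 'a \<Rightarrow> 'a set" where
  "max_face P c = {x \<in> P. \<forall>y \<in> P. c \<bullet> y \<le> c \<bullet> x}"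

definition normal_cone :: "'a::euclidean_space set \<Rightarrow> 'a set \<Rightarrow> 'a set" where
  "normal_cone P F = {c. F \<subseteq> max_face P c}"

definition normal_fan :: "'a::euclidean_space set \<Rightarrow> 'a set set" where
  "normal_fan P = {normal_cone P F | F. F face_of P \<and> F \<noteq> {}}"

definition inscribed_origin :: "'a::euclidean_space set \<Rightarrow> bool" where
  "inscribed_origin P = (\<exists>r. \<forall>v. v extreme_point_of P \<longrightarrow> norm v = r)"

end

theory Submission
  imports Defs
begin

lemma mf_sub: "max_face P c \<subseteq> P"
  by (auto simp: max_face_def)

lemma mf_nonempty:
  fixes P :: "'a::euclidean_space set"
  assumes "compact P" "P \<noteq> {}" shows "max_face P c \<noteq> {}"
proof -
  have "continuous_on P (\<lambda>x. c \<bullet> x)" by (intro continuous_intros)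
  then obtain x where "x \<in> P" "\<forall>y\<in>P. c \<bullet> y \<le> c \<bullet> x"
    using continuous_attains_sup[OF assms] by blast
  then show ?thesis by (auto simp: max_face_def)
qed

lemma mf_face:
  fixes P :: "'a::euclidean_space set"
  assumes "compact P" "convex P" shows "max_face P c face_of P"
proof (cases "P = {}")
  case True then show ?thesis by (simp add: max_face_def)
next
  case False
  then obtain x where x: "x \<in> max_face P c" using mf_nonempty[OF assms(1) False] by blast
  have eq: "max_face P c = P \<inter> {y. c \<bullet> y = c \<bullet> x}"
    using x by (auto simp: max_face_def intro: antisym)
  have "\<And>y. y \<in> P \<Longrightarrow> c \<bullet> y \<le> c \<bullet> x" using x by (auto simp: max_face_def)
  then show ?thesis unfolding eq by (rule face_of_Int_supporting_hyperplane_le[OF assms(2)])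
qed

lemma mf_eq_val: "x \<in> max_face P c \<Longrightarrow> y \<in> max_face P c \<Longrightarrow> c \<bullet> x = c \<bullet> y"
  by (auto simp: max_face_def intro: antisym)

lemma polytope_ne_ext: 
  fixes P :: "'a::euclidean_space set"
  assumes "polytope P" shows "finite {x. x extreme_point_of P}" "P = convex hull {x. x extreme_point_of P}"
  using finite_polyhedron_extreme_points polytope_imp_polyhedron assms apply blast
  using Krein_Milman_Minkowski assms polytope_imp_compact polytope_imp_convex by blast

lemma usc:
  fixes P :: "'a::euclidean_space set"
  assumes "polytope P"
  shows "\<exists>e>0. \<forall>c'. dist c' c < e \<longrightarrow> max_face P c' \<subseteq> max_face P c"
proof (cases "P = {}")
  case True then show ?thesis by (auto simp: max_face_def intro: exI[of _ 1])
next
  case False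
  have cp: "compact P" "convex P" using assms polytope_imp_compact polytope_imp_convex by auto
  define E where "E = {x. x extreme_point_of P}"
  have fE: "finite E" using polytope_ne_ext[OF assms] E_def by simp
  obtain x0 where x0: "x0 \<in> max_face P c" using mf_nonempty[OF cp(1) False] by blast
  have "\<forall>y\<in>E - max_face P c. eventually (\<lambda>c'. c' \<bullet> y < c' \<bullet> x0) (nhds c)"
  proof
    fix y assume y: "y \<in> E - max_face P c"
    then have "y \<in> P" using E_def extreme_point_of_def by blast
    with y x0 have "c \<bullet> y < c \<bullet> x0" by (auto simp: max_face_def)
    moreover have "((\<lambda>c'. c' \<bullet> x0 - c' \<bullet> y) \<longlongrightarrow> c \<bullet> x0 - c \<bullet> y) (nhds c)"
      by (intro tendsto_intros filterlim_ident)
    ultimately have "eventually (\<lambda>c'. c' \<bullet> x0 - c' \<bullet> y > 0) (nhds c)"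
      by (intro order_tendstoD(1)) auto
    then show "eventually (\<lambda>c'. c' \<bullet> y < c' \<bullet> x0) (nhds c)" by (rule eventually_mono) auto
  qed
  then have "eventually (\<lambda>c'. \<forall>y\<in>E - max_face P c. c' \<bullet> y < c' \<bullet> x0) (nhds c)"
    using fE by (simp add: eventually_ball_finite)
  then obtain e where e: "e > 0" "\<And>c'. dist c' c < e \<Longrightarrow> \<forall>y\<in>E - max_face P c. c' \<bullet> y < c' \<bullet> x0"
    unfolding eventually_nhds_metric by blast
  show ?thesis
  proof (intro exI[of _ e] conjI allI impI)
    show "0 < e" by fact
  next
    fix c' assume d: "dist c' c < e"
    define F where "F = max_face P c'"
    have F: "F face_of P" using mf_face[OF cp] F_def by simp
    have Fc: "compact F" "convex F" using F cp face_of_imp_compact face_of_imp_convex by blast+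
    have "{x. x extreme_point_of F} \<subseteq> max_face P c"
    proof
      fix y assume "y \<in> {x. x extreme_point_of F}"
      then have yE: "y \<in> E" and yF: "y \<in> F" using extreme_point_of_face[OF F] E_def by auto
      show "y \<in> max_face P c"
      proof (rule ccontr)
        assume "y \<notin> max_face P c"
        then have "c' \<bullet> y < c' \<bullet> x0" using e(2)[OF d] yE by blast
        moreover have "x0 \<in> P" using x0 mf_sub by blast
        ultimately show False using yF F_def by (auto simp: max_face_def)
      qed
    qed
    moreover have "convex (max_face P c)" using mf_face[OF cp] face_of_imp_convex by blast
    ultimately have "convex hull {x. x extreme_point_of F} \<subseteq> max_face P c"
      by (simp add: hull_minimal)
    then show "max_face P c' \<subseteq> max_face P c"
      using Krein_Milman_Minkowski[OF Fc] F_def by simp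
  qed
qed


lemma nc_val: "c' \<in> normal_cone P F \<Longrightarrow> x \<in> F \<Longrightarrow> a \<in> F \<Longrightarrow> c' \<bullet> x = c' \<bullet> a"
  unfolding normal_cone_def using mf_eq_val by blast

lemma fan_one:
  fixes P P' :: "'a::euclidean_space set"
  assumes "normal_fan P = normal_fan P'" "polytope P" "P \<noteq> {}"
  shows "normal_cone P' (max_face P' c) \<subseteq> normal_cone P (max_face P c)"
proof -
  have cp: "compact P" "convex P" using assms polytope_imp_compact polytope_imp_convex by auto
  have "normal_cone P (max_face P c) \<in> normal_fan P"
    unfolding normal_fan_def using mf_face[OF cp] mf_nonempty[OF cp(1) assms(3)] by blast
  then obtain F' where F': "normal_cone P (max_face P c) = normal_cone P' F'"
    using assms(1) unfolding normal_fan_def by blast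
  have "c \<in> normal_cone P (max_face P c)" by (simp add: normal_cone_def)
  then have "c \<in> normal_cone P' F'" using F' by simp
  then have "F' \<subseteq> max_face P' c" by (simp add: normal_cone_def)
  then have "normal_cone P' (max_face P' c) \<subseteq> normal_cone P' F'"
    by (auto simp: normal_cone_def)
  then show ?thesis using F' by simp
qed

lemma fan_eq:
  fixes P P' :: "'a::euclidean_space set"
  assumes "normal_fan P = normal_fan P'" "polytope P" "P \<noteq> {}" "polytope P'" "P' \<noteq> {}"
  shows "normal_cone P (max_face P c) = normal_cone P' (max_face P' c)"
  using fan_one[OF assms(1-3)] fan_one[OF sym[OF assms(1)] assms(4,5)] by blast

lemma vertex_arg:
  fixes a :: "'a::euclidean_space"
  assumes "normal_cone P F = normal_cone P' F'" "e > 0" "ball c e \<subseteq> normal_cone P F" "a \<in> F'"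
  shows "F' = {a}"
proof -
  have "x = a" if x: "x \<in> F'" for x
  proof (rule ccontr)
    assume ne: "x \<noteq> a"
    define c' where "c' = c + (e/2 / norm (x - a)) *\<^sub>R (x - a)"
    have "c \<in> ball c e" using assms(2) by simp
    moreover have "c' \<in> ball c e" using assms(2) ne by (simp add: c'_def dist_norm)
    ultimately have "c \<in> normal_cone P' F'" "c' \<in> normal_cone P' F'" using assms(1,3) by auto
    then have "c \<bullet> x = c \<bullet> a" "c' \<bullet> x = c' \<bullet> a" using nc_val x assms(4) by metis+
    then have z: "c \<bullet> (x - a) = 0" "c' \<bullet> (x - a) = 0" by (simp_all add: inner_diff_right)
    have "c' \<bullet> (x - a) = c \<bullet> (x - a) + (e/2 / norm (x - a)) * ((x - a) \<bullet> (x - a))"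
      by (simp add: c'_def inner_add_left)
    then have "(e/2 / norm (x - a)) * ((x - a) \<bullet> (x - a)) = 0" using z by simp
    then show False using ne assms(2) by simp
  qed
  then show ?thesis using assms(4) by blast
qed

lemma vertex_ball:
  fixes P :: "'a::euclidean_space set"
  assumes "polytope P" "max_face P c = {a}"
  shows "\<exists>e>0. ball c e \<subseteq> normal_cone P {a}"
proof -
  have ne: "P \<noteq> {}" using assms(2) mf_sub by blast
  obtain e where e: "e > 0" "\<And>c'. dist c' c < e \<Longrightarrow> max_face P c' \<subseteq> max_face P c"
    using usc[OF assms(1)] by blast
  have "ball c e \<subseteq> normal_cone P {a}"
  proof
    fix c' assume "c' \<in> ball c e"
    then have "max_face P c' \<subseteq> {a}" using e assms(2) by (simp add: dist_commute)
    moreover have "max_face P c' \<noteq> {}" using mf_nonempty ne polytope_imp_compact assms(1) by blast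
    ultimately have "max_face P c' = {a}" by blast
    then show "c' \<in> normal_cone P {a}" by (simp add: normal_cone_def)
  qed
  then show ?thesis using e by blast
qed

lemma line_sphere:
  fixes p q :: "'a::euclidean_space"
  assumes "norm p = r" "norm q = r" "norm (p + \<mu> *\<^sub>R (q - p)) = r" "p \<noteq> q"
  shows "\<mu> = 0 \<or> \<mu> = 1"
proof -
  define d where "d = q - p"
  have dne: "d \<bullet> d \<noteq> 0" using assms(4) by (simp add: d_def)
  have "q = p + d" by (simp add: d_def)
  have e1: "(p + d) \<bullet> (p + d) = p \<bullet> p" using assms(1,2) d_def
    by (metis \<open>q = p + d\<close> norm_eq)
  have e2: "(p + \<mu> *\<^sub>R d) \<bullet> (p + \<mu> *\<^sub>R d) = p \<bullet> p" using assms(1,3) d_def by (metis norm_eq)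
  from e1 have "2 * (p \<bullet> d) = - (d \<bullet> d)" by (simp add: inner_add_left inner_add_right inner_commute)
  moreover from e2 have "2 * \<mu> * (p \<bullet> d) + \<mu> * \<mu> * (d \<bullet> d) = 0"
    by (simp add: inner_add_left inner_add_right inner_commute algebra_simps)
  ultimately have "\<mu> * (\<mu> - 1) * (d \<bullet> d) = 0" by (simp add: algebra_simps)
  then show ?thesis using dne by simp
qed

lemma mf_restrict:
  assumes "max_face P c \<subseteq> F" "F \<subseteq> P" "max_face P c \<noteq> {}"
  shows "max_face P c = max_face F c"
proof
  show "max_face P c \<subseteq> max_face F c" using assms(1,2) unfolding max_face_def by blast
next
  obtain z where z: "z \<in> max_face P c" using assms(3) by blast
  show "max_face F c \<subseteq> max_face P c"
  proof
    fix x assume x: "x \<in> max_face F c"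
    have "c \<bullet> z \<le> c \<bullet> x" using x z assms(1) unfolding max_face_def by blast
    moreover have "\<forall>y\<in>P. c \<bullet> y \<le> c \<bullet> z" using z unfolding max_face_def by blast
    ultimately show "x \<in> max_face P c" using x assms(2) unfolding max_face_def by force
  qed
qed

lemma exposed_vertex:
  fixes P :: "'a::euclidean_space set"
  assumes "polytope P" "w extreme_point_of P"
  shows "\<exists>c. max_face P c = {w}"
proof -
  have "{w} face_of P" using assms(2) face_of_singleton by blast
  then have "{w} exposed_face_of P"
    using exposed_face_of_polyhedron polytope_imp_polyhedron assms(1) by blast
  then obtain a b where ab: "P \<subseteq> {x. a \<bullet> x \<le> b}" "{w} = P \<inter> {x. a \<bullet> x = b}"
    unfolding exposed_face_of_def by blast
  have wP: "w \<in> P" "a \<bullet> w = b" using ab(2) by blast+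
  have "max_face P a = {w}"
  proof
    show "{w} \<subseteq> max_face P a" using wP ab(1) unfolding max_face_def by auto
  next
    show "max_face P a \<subseteq> {w}"
    proof
      fix x assume "x \<in> max_face P a"
      then have "x \<in> P" "a \<bullet> w \<le> a \<bullet> x" using wP unfolding max_face_def by auto
      moreover then have "a \<bullet> x \<le> b" using ab(1) by blast
      ultimately have "x \<in> P \<inter> {x. a \<bullet> x = b}" using wP by auto
      then show "x \<in> {w}" using ab(2) by blast
    qed
  qed
  then show ?thesis by blast
qed


lemma seg_val:
  fixes a b :: "'a::euclidean_space"
  assumes "y \<in> convex hull {a, b}" "c' \<bullet> (b - a) = 0"
  shows "c' \<bullet> y = c' \<bullet> a"
proof -
  from assms(1) obtain u where "y = (1 - u) *\<^sub>R a + u *\<^sub>R b"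
    unfolding segment_convex_hull[symmetric] closed_segment_def by blast
  then have "y = a + u *\<^sub>R (b - a)" by (simp add: algebra_simps)
  then show ?thesis using assms(2) by (simp add: inner_add_right)
qed

lemma closure_step:
  fixes P P' :: "'a::euclidean_space set"
  assumes PP: "polytope P" "polytope P'"
   and rP: "\<forall>x. x extreme_point_of P \<longrightarrow> norm x = r"
   and rP': "\<forall>x. x extreme_point_of P' \<longrightarrow> norm x = r"
   and NN: "normal_cone P (max_face P c) = normal_cone P' (max_face P' c)"
   and aF': "a \<in> max_face P' c" and aF: "a extreme_point_of (max_face P c)"
   and card2: "card {x. x extreme_point_of (max_face P c)} \<le> 2"
  shows "max_face P c = max_face P' c"
proof -
  define F where "F = max_face P c"
  define F' where "F' = max_face P' c"
  have cp: "compact P" "convex P" using PP polytope_imp_compact polytope_imp_convex by auto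
  have cp': "compact P'" "convex P'" using PP polytope_imp_compact polytope_imp_convex by auto
  have Ff: "F face_of P" using mf_face[OF cp] F_def by simp
  have Ff': "F' face_of P'" using mf_face[OF cp'] F'_def by simp
  have Fc: "compact F" "convex F" using Ff cp face_of_imp_compact face_of_imp_convex by blast+
  have Fc': "compact F'" "convex F'" using Ff' cp' face_of_imp_compact face_of_imp_convex by blast+
  define EF where "EF = {x. x extreme_point_of F}"
  have EFsub: "EF \<subseteq> {x. x extreme_point_of P}" using extreme_point_of_face[OF Ff] EF_def by auto
  have fEF: "finite EF" using finite_subset[OF EFsub polytope_ne_ext(1)[OF PP(1)]] .
  have Fh: "F = convex hull EF" using Krein_Milman_Minkowski[OF Fc] EF_def by simp
  have aEF: "a \<in> EF" using aF F_def EF_def by simp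
  have aF'': "a \<in> F'" using aF' F'_def by simp
  have aFF: "a \<in> F" using aF F_def extreme_point_of_def by blast
  have cN': "c \<in> normal_cone P' F'" by (simp add: normal_cone_def F'_def)
  show ?thesis
  proof (cases "EF = {a}")
    case True
    then have "F = {a}" using Fh by simp
    then obtain e where e: "e > 0" "ball c e \<subseteq> normal_cone P F"
      using vertex_ball[OF PP(1)] F_def by metis
    have "F' = {a}" using vertex_arg[OF NN[folded F_def F'_def] e aF''] .
    then show ?thesis using \<open>F = {a}\<close> F_def F'_def by simp
  next
    case False
    then obtain b where b: "b \<in> EF" "b \<noteq> a" using aEF by blast
    have "EF = {a, b}"
    proof -
      have "{a, b} \<subseteq> EF" using aEF b by simp
      moreover have "card {a, b} = 2" using b by simp
      ultimately show ?thesis using card_subset_eq[OF fEF] card2 EF_def F_def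
        by (metis card_mono fEF le_antisym)
    qed
    then have Fab: "F = convex hull {a, b}" using Fh by simp
    have ra: "norm a = r" and rb: "norm b = r" using rP EFsub aEF b by auto
    have bFF: "b \<in> F" using Fab by (simp add: hull_inc)
    have cab: "c \<bullet> (b - a) = 0" using mf_eq_val[of b P c a] bFF aFF F_def by (simp add: inner_diff_right)
    obtain e where e: "e > 0" "\<And>c'. dist c' c < e \<Longrightarrow> max_face P c' \<subseteq> max_face P c"
      using usc[OF PP(1)] by blast
    have step1: "c + e' \<in> normal_cone P F" if e': "norm e' < e" "e' \<bullet> (b - a) = 0" for e'
    proof -
      define c' where "c' = c + e'"
      have "dist c' c < e" using e' by (simp add: c'_def dist_norm)
      then have G: "max_face P c' \<subseteq> F" using e F_def by simp
      have "P \<noteq> {}" using aFF F_def mf_sub by blast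
      then obtain z where z: "z \<in> max_face P c'" using mf_nonempty[OF cp(1)] by blast
      have c'd: "c' \<bullet> (b - a) = 0" using cab e' by (simp add: c'_def inner_add_left)
      have "F \<subseteq> max_face P c'"
      proof
        fix y assume y: "y \<in> F"
        have "c' \<bullet> y = c' \<bullet> a" using seg_val[OF _ c'd] y Fab by simp
        moreover have "c' \<bullet> z = c' \<bullet> a" using seg_val[OF _ c'd] z G Fab by blast
        moreover have "y \<in> P" using y F_def mf_sub by blast
        ultimately show "y \<in> max_face P c'" using z unfolding max_face_def by auto
      qed
      then show ?thesis by (simp add: normal_cone_def c'_def)
    qed
    have step2: "\<exists>lam. x = a + lam *\<^sub>R (b - a)" if x: "x \<in> F'" for x
    proof -
      define d where "d = b - a"
      define y where "y = x - a"
      have orth: "e' \<bullet> y = 0" if "norm e' < e" "e' \<bullet> d = 0" for e'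
      proof -
        have "c + e' \<in> normal_cone P' F'" using step1 that NN F_def F'_def d_def by simp
        then have "(c + e') \<bullet> x = (c + e') \<bullet> a" using nc_val x aF'' by metis
        moreover have "c \<bullet> x = c \<bullet> a" using nc_val[OF cN' x aF''] .
        ultimately show ?thesis by (simp add: y_def inner_add_left inner_diff_right)
      qed
      define lam where "lam = (y \<bullet> d) / (d \<bullet> d)"
      define w where "w = y - lam *\<^sub>R d"
      have dd: "d \<bullet> d \<noteq> 0" using b by (simp add: d_def)
      have wd: "w \<bullet> d = 0" using dd by (simp add: w_def lam_def inner_diff_left)
      have "w = 0"
      proof (rule ccontr)
        assume wne: "w \<noteq> 0"
        define e' where "e' = (e/2 / norm w) *\<^sub>R w"
        have "norm e' < e" using wne e(1) by (simp add: e'_def)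
        moreover have "e' \<bullet> d = 0" using wd by (simp add: e'_def)
        ultimately have "e' \<bullet> y = 0" by (rule orth)
        then have "w \<bullet> y = 0" using wne e(1) by (simp add: e'_def)
        then have "w \<bullet> w = 0" using wd by (simp add: w_def inner_diff_right inner_commute)
        then show False using wne by simp
      qed
      then have "x = a + lam *\<^sub>R d" by (simp add: w_def y_def algebra_simps)
      then show ?thesis using d_def by blast
    qed
    have step3: "{x. x extreme_point_of F'} \<subseteq> {a, b}"
    proof
      fix y assume "y \<in> {x. x extreme_point_of F'}"
      then have y: "y extreme_point_of P'" "y \<in> F'" using extreme_point_of_face[OF Ff'] by auto
      then have ry: "norm y = r" using rP' by blast
      obtain lam where l: "y = a + lam *\<^sub>R (b - a)" using step2 y(2) by blast
      have "lam = 0 \<or> lam = 1" using line_sphere[OF ra rb _ b(2)[symmetric]] ry l by simp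
      then show "y \<in> {a, b}" using l by auto
    qed
    have F'h: "F' = convex hull {x. x extreme_point_of F'}" using Krein_Milman_Minkowski[OF Fc'] .
    have "{x. x extreme_point_of F'} \<noteq> {}"
      using extreme_point_exists_convex[OF Fc'] aF'' by blast
    then consider "{x. x extreme_point_of F'} = {a, b}" | y where "y \<in> {a, b}" "{x. x extreme_point_of F'} = {y}"
      using step3 by blast
    then show ?thesis
    proof cases
      case 1
      then show ?thesis using F'h Fab F_def F'_def by simp
    next
      case 2
      then have "F' = {y}" using F'h by simp
      then obtain e2 where e2: "e2 > 0" "ball c e2 \<subseteq> normal_cone P' F'"
        using vertex_ball[OF PP(2)] F'_def by metis
      have yF: "y \<in> F" using 2(1) aFF bFF by blast
      have "F = {y}" using vertex_arg[OF NN[folded F_def F'_def, symmetric] e2 yF] .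
      then show ?thesis using aFF bFF b(2) by blast
    qed
  qed
qed


lemma noncol:
  fixes p q s :: "'a::euclidean_space"
  assumes "norm p = r" "norm q = r" "norm s = r" "p \<noteq> q" "p \<noteq> s" "q \<noteq> s"
    and "\<alpha> *\<^sub>R (q - p) + \<beta> *\<^sub>R (s - p) = 0"
  shows "\<alpha> = 0 \<and> \<beta> = 0"
proof (cases "\<beta> = 0")
  case True
  then show ?thesis using assms(4,7) by simp
next
  case False
  have "\<beta> *\<^sub>R (s - p) = - (\<alpha> *\<^sub>R (q - p))" using assms(7)
    by (simp add: eq_neg_iff_add_eq_0 add.commute)
  then have "(1/\<beta>) *\<^sub>R (\<beta> *\<^sub>R (s - p)) = (1/\<beta>) *\<^sub>R (- (\<alpha> *\<^sub>R (q - p)))" by simp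
  then have "s - p = (- \<alpha> / \<beta>) *\<^sub>R (q - p)" using False by simp
  then have "s = p + (- \<alpha> / \<beta>) *\<^sub>R (q - p)" by (simp add: algebra_simps)
  moreover have "norm (p + (- \<alpha> / \<beta>) *\<^sub>R (q - p)) = r" using assms(3) calculation by metis
  ultimately have "(- \<alpha> / \<beta>) = 0 \<or> (- \<alpha> / \<beta>) = 1" using line_sphere[OF assms(1,2) _ assms(4)] by blast
  then have "s = p \<or> s = q" using \<open>s = p + _\<close> by auto
  then show ?thesis using assms(5,6) by auto
qed

definition nfun :: "'a::euclidean_space \<Rightarrow> 'a \<Rightarrow> 'a \<Rightarrow> 'a \<Rightarrow> 'a" where
  "nfun c1 p q s = (let m = (c1 \<bullet> (s - p)) *\<^sub>R (q - p) - (c1 \<bullet> (q - p)) *\<^sub>R (s - p)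
     in if m = 0 then q - p else m)"

lemma nfun_ne:
  fixes p q s :: "'a::euclidean_space"
  assumes "p \<noteq> q" shows "nfun c1 p q s \<noteq> 0"
  using assms by (simp add: nfun_def Let_def)

lemma nfun_prop:
  fixes p q s :: "'a::euclidean_space"
  assumes "norm p = r" "norm q = r" "norm s = r" "p \<noteq> q" "p \<noteq> s" "q \<noteq> s"
    and t: "0 < t" "t < 1"
    and h1: "((1 - t) *\<^sub>R c0 + t *\<^sub>R c1) \<bullet> (q - p) = 0"
    and h2: "((1 - t) *\<^sub>R c0 + t *\<^sub>R c1) \<bullet> (s - p) = 0"
  shows "c0 \<bullet> nfun c1 p q s = 0"
proof -
  define d1 where "d1 = q - p"
  define d2 where "d2 = s - p"
  define m where "m = (c1 \<bullet> d2) *\<^sub>R d1 - (c1 \<bullet> d1) *\<^sub>R d2"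
  have e1: "(1 - t) * (c0 \<bullet> d1) = - t * (c1 \<bullet> d1)" using h1
    by (simp add: d1_def inner_add_left algebra_simps)
  have e2: "(1 - t) * (c0 \<bullet> d2) = - t * (c1 \<bullet> d2)" using h2
    by (simp add: d2_def inner_add_left algebra_simps)
  show ?thesis
  proof (cases "m = 0")
    case True
    have "(c1 \<bullet> d2) *\<^sub>R d1 + (- (c1 \<bullet> d1)) *\<^sub>R d2 = 0" using True by (simp add: m_def)
    then have "c1 \<bullet> d2 = 0 \<and> - (c1 \<bullet> d1) = 0" using noncol[OF assms(1-6)] unfolding d1_def d2_def by blast
    then have "c1 \<bullet> d1 = 0" by simp
    then have "c0 \<bullet> d1 = 0" using e1 t by simp
    then show ?thesis using True by (simp add: nfun_def Let_def m_def d1_def d2_def)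
  next
    case False
    have "(1 - t) * (c0 \<bullet> m) = (c1 \<bullet> d2) * ((1 - t) * (c0 \<bullet> d1)) - (c1 \<bullet> d1) * ((1 - t) * (c0 \<bullet> d2))"
      by (simp add: m_def inner_diff_right algebra_simps)
    also have "\<dots> = (c1 \<bullet> d2) * (- t * (c1 \<bullet> d1)) - (c1 \<bullet> d1) * (- t * (c1 \<bullet> d2))"
      by (simp only: e1 e2)
    also have "\<dots> = 0" by (simp add: algebra_simps)
    finally have "c0 \<bullet> m = 0" using t by simp
    then show ?thesis using False by (simp add: nfun_def Let_def m_def d1_def d2_def)
  qed
qed

lemma avoid_hyperplanes:
  fixes N :: "'a::euclidean_space set"
  assumes "finite N" "0 \<notin> N"
  shows "open U \<Longrightarrow> U \<noteq> {} \<Longrightarrow> \<exists>x\<in>U. \<forall>n\<in>N. n \<bullet> x \<noteq> 0"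
  using assms
proof (induction N arbitrary: U rule: finite_induct)
  case empty
  then show ?case by blast
next
  case (insert n N)
  define U' where "U' = U \<inter> {x. n \<bullet> x \<noteq> 0}"
  have "open U'" unfolding U'_def
    by (intro open_Int insert.prems open_Collect_neq continuous_intros)
  moreover have "U' \<noteq> {}"
  proof -
    obtain x where x: "x \<in> U" using insert.prems by blast
    then obtain e where e: "e > 0" "ball x e \<subseteq> U" using insert.prems open_contains_ball by blast
    have n0: "n \<noteq> 0" using insert.prems by auto
    define y where "y = x + (e / 2 / norm n) *\<^sub>R n"
    have "y \<in> U" using e n0 by (auto simp: y_def dist_norm intro!: subsetD[OF e(2)])
    moreover have "n \<bullet> x \<noteq> 0 \<or> n \<bullet> y \<noteq> 0"
      using n0 e(1) by (auto simp: y_def inner_add_right)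
    ultimately show ?thesis using x U'_def by blast
  qed
  ultimately obtain x where "x \<in> U'" "\<forall>m\<in>N. m \<bullet> x \<noteq> 0" using insert.IH insert.prems by blast
  then show ?case using U'_def by auto
qed


lemma three_elems:
  assumes "finite X" "\<not> card X \<le> 2"
  obtains p q s where "p \<in> X" "q \<in> X" "s \<in> X" "p \<noteq> q" "p \<noteq> s" "q \<noteq> s"
proof -
  obtain p where p: "p \<in> X" using assms by fastforce
  have c1: "card (X - {p}) > 1" using assms p by (simp add: card_Diff_singleton)
  then have "X - {p} \<noteq> {}" by (intro notI) simp
  then obtain q where q: "q \<in> X - {p}" by blast
  have "card (X - {p} - {q}) > 0" using c1 q assms by (simp add: card_Diff_singleton)
  then have "X - {p} - {q} \<noteq> {}" by (intro notI) simp
  then obtain s where s: "s \<in> X - {p} - {q}" by blast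
  show ?thesis using that p q s by blast
qed

lemma ext_singleton: "{x. x extreme_point_of {a}} = {a}"
  by (auto simp: extreme_point_of_def)

lemma ext_sub:
  fixes P P' :: "'a::euclidean_space set" and v :: 'a
  assumes PP: "polytope P" "polytope P'"
    and rP: "\<forall>x. x extreme_point_of P \<longrightarrow> norm x = r"
    and rP': "\<forall>x. x extreme_point_of P' \<longrightarrow> norm x = r"
    and fan: "normal_fan P = normal_fan P'"
    and vP: "v extreme_point_of P" and vP': "v extreme_point_of P'"
    and Nv: "normal_cone P {v} = normal_cone P' {v}"
    and wP: "w extreme_point_of P"
  shows "w \<in> P'"
proof -
  have ne: "P \<noteq> {}" "P' \<noteq> {}" using vP vP' extreme_point_of_def by auto
  have cp: "compact P" "convex P" using PP polytope_imp_compact polytope_imp_convex by auto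
  have cp': "compact P'" "convex P'" using PP polytope_imp_compact polytope_imp_convex by auto
  have NN: "\<And>c. normal_cone P (max_face P c) = normal_cone P' (max_face P' c)"
    using fan_eq[OF fan PP(1) ne(1) PP(2) ne(2)] .
  define E where "E = {x. x extreme_point_of P}"
  have fE: "finite E" using polytope_ne_ext(1)[OF PP(1)] E_def by simp
  obtain c1 where c1: "max_face P c1 = {w}" using exposed_vertex[OF PP(1) wP] by blast
  define U where "U = {c. max_face P c = {v}}"
  have "open U" unfolding open_contains_ball
  proof
    fix c assume c: "c \<in> U"
    obtain e where e: "e > 0" "\<And>c'. dist c' c < e \<Longrightarrow> max_face P c' \<subseteq> max_face P c"
      using usc[OF PP(1)] by blast
    have "ball c e \<subseteq> U"
    proof
      fix c' assume "c' \<in> ball c e"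
      then have "max_face P c' \<subseteq> {v}" using e c U_def by (simp add: dist_commute)
      moreover have "max_face P c' \<noteq> {}" using mf_nonempty[OF cp(1) ne(1)] .
      ultimately show "c' \<in> U" using U_def by blast
    qed
    then show "\<exists>e>0. ball c e \<subseteq> U" using e(1) by blast
  qed
  moreover have "U \<noteq> {}" using exposed_vertex[OF PP(1) vP] U_def by blast
  moreover define N where "N = (\<lambda>(p,q,s). nfun c1 p q s) ` {(p,q,s). p \<in> E \<and> q \<in> E \<and> s \<in> E \<and> p \<noteq> q \<and> p \<noteq> s \<and> q \<noteq> s}"
  moreover have "finite N"
  proof -
    have "{(p,q,s). p \<in> E \<and> q \<in> E \<and> s \<in> E \<and> p \<noteq> q \<and> p \<noteq> s \<and> q \<noteq> s} \<subseteq> E \<times> E \<times> E" by auto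
    then show ?thesis unfolding N_def using fE by (meson finite_SigmaI finite_imageI finite_subset)
  qed
  moreover have "0 \<notin> N" unfolding N_def using nfun_ne by fastforce
  ultimately obtain c0 where c0: "c0 \<in> U" "\<forall>n\<in>N. n \<bullet> c0 \<noteq> 0"
    using avoid_hyperplanes by metis
  have c0v: "max_face P c0 = {v}" using c0 U_def by simp
  define cc where "cc t = (1 - t) *\<^sub>R c0 + t *\<^sub>R c1" for t
  define Q where "Q t \<longleftrightarrow> max_face P (cc t) = max_face P' (cc t)" for t
  have Q0: "Q 0"
  proof -
    have "c0 \<in> normal_cone P {v}" using c0v by (simp add: normal_cone_def)
    then have "c0 \<in> normal_cone P' {v}" using Nv by simp
    then have "v \<in> max_face P' c0" by (simp add: normal_cone_def)
    moreover obtain e where "e > 0" "ball c0 e \<subseteq> normal_cone P {v}" using vertex_ball[OF PP(1) c0v] by blast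
    ultimately have "max_face P' c0 = {v}" using vertex_arg NN[of c0] c0v by metis
    then show ?thesis using c0v by (simp add: Q_def cc_def)
  qed
  have card: "card {x. x extreme_point_of (max_face P (cc t))} \<le> 2" if t: "0 \<le> t" "t \<le> 1" for t
  proof (cases "t = 0 \<or> t = 1")
    case True
    then show ?thesis using c0v c1 by (auto simp: cc_def ext_singleton)
  next
    case False
    then have t': "0 < t" "t < 1" using t by auto
    define X where "X = {x. x extreme_point_of (max_face P (cc t))}"
    have Ff: "max_face P (cc t) face_of P" using mf_face[OF cp] .
    have XE: "X \<subseteq> E" using extreme_point_of_face[OF Ff] X_def E_def by auto
    have XF: "X \<subseteq> max_face P (cc t)" using X_def extreme_point_of_def by auto
    show ?thesis
    proof (rule ccontr)
      assume "\<not> ?thesis"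
      then obtain p q s where pqs: "p \<in> X" "q \<in> X" "s \<in> X" "p \<noteq> q" "p \<noteq> s" "q \<noteq> s"
        using three_elems[of X] finite_subset[OF XE fE] X_def by blast
      have h1: "cc t \<bullet> (q - p) = 0" using mf_eq_val[of q P "cc t" p] pqs XF by (auto simp: inner_diff_right)
      have h2: "cc t \<bullet> (s - p) = 0" using mf_eq_val[of s P "cc t" p] pqs XF by (auto simp: inner_diff_right)
      have nr: "norm p = r" "norm q = r" "norm s = r" using pqs XE rP E_def by auto
      have "c0 \<bullet> nfun c1 p q s = 0"
        using nfun_prop[OF nr pqs(4-6) t' h1[unfolded cc_def] h2[unfolded cc_def]] .
      moreover have "nfun c1 p q s \<in> N" unfolding N_def using pqs XE by force
      ultimately show False using c0(2) inner_commute by metis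
    qed
  qed
  have loc: "\<exists>T. openin (top_of_set {0..1}) T \<and> t \<in> T \<and> (\<forall>x\<in>T. \<forall>y\<in>T. Q x \<longrightarrow> Q y)"
    if t: "t \<in> {0..1}" for t
  proof -
    obtain e1 where e1: "e1 > 0" "\<And>c'. dist c' (cc t) < e1 \<Longrightarrow> max_face P c' \<subseteq> max_face P (cc t)"
      using usc[OF PP(1)] by blast
    obtain e2 where e2: "e2 > 0" "\<And>c'. dist c' (cc t) < e2 \<Longrightarrow> max_face P' c' \<subseteq> max_face P' (cc t)"
      using usc[OF PP(2)] by blast
    define e where "e = min e1 e2"
    define \<delta> where "\<delta> = e / (norm (c1 - c0) + 1)"
    have np: "norm (c1 - c0) + 1 > 0" using norm_ge_zero[of "c1 - c0"] by linarith
    have dpos: "\<delta> > 0" using e1 e2 np by (simp add: \<delta>_def e_def)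
    define T where "T = {0..1} \<inter> ball t \<delta>"
    have key: "Q s \<longleftrightarrow> Q t" if s: "s \<in> T" for s
    proof -
      have "cc s - cc t = (s - t) *\<^sub>R (c1 - c0)" by (simp add: cc_def algebra_simps)
      then have "dist (cc s) (cc t) = \<bar>s - t\<bar> * norm (c1 - c0)" by (simp add: dist_norm)
      also have "\<dots> \<le> \<bar>s - t\<bar> * (norm (c1 - c0) + 1)" by (simp add: mult_left_mono)
      also have "\<dots> < \<delta> * (norm (c1 - c0) + 1)"
        using s np by (intro mult_strict_right_mono) (auto simp: T_def dist_real_def abs_minus_commute)
      also have "\<dots> = e" using np by (simp add: \<delta>_def)
      finally have d: "dist (cc s) (cc t) < e" .
      have sub: "max_face P (cc s) \<subseteq> max_face P (cc t)" using e1 d e_def by simp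
      have sub': "max_face P' (cc s) \<subseteq> max_face P' (cc t)" using e2 d e_def by simp
      have nes: "max_face P (cc s) \<noteq> {}" "max_face P' (cc s) \<noteq> {}"
        using mf_nonempty cp(1) cp'(1) ne by blast+
      show ?thesis
      proof
        assume Qt: "Q t"
        then show "Q s" unfolding Q_def
          using mf_restrict[OF sub mf_sub nes(1)] mf_restrict[OF sub' mf_sub nes(2)] Qt[unfolded Q_def]
          by simp
      next
        assume Qs: "Q s"
        define H where "H = max_face P (cc s)"
        have Hf: "H face_of P" using mf_face[OF cp] H_def by simp
        have Hc: "compact H" "convex H" using Hf cp face_of_imp_compact face_of_imp_convex by blast+
        obtain a where a: "a extreme_point_of H" using extreme_point_exists_convex[OF Hc] nes H_def by blast
        have HF: "H face_of max_face P (cc t)" using face_of_subset[OF Hf] sub mf_sub H_def by metis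
        have aF: "a extreme_point_of max_face P (cc t)"
          using extreme_point_of_face[OF HF] extreme_point_of_face[OF Hf] a by blast
        have "a \<in> H" using a extreme_point_of_def by blast
        then have aF': "a \<in> max_face P' (cc t)"
          using Qs sub' H_def unfolding Q_def by blast
        have "max_face P (cc t) = max_face P' (cc t)"
          using closure_step[OF PP rP rP' NN aF' aF card] t by simp
        then show "Q t" by (simp add: Q_def)
      qed
    qed
    have "openin (top_of_set {0..1}) T" unfolding T_def by (intro openin_open_Int open_ball)
    moreover have "t \<in> T" using t dpos by (simp add: T_def)
    ultimately show ?thesis using key by blast
  qed
  have "Q 1" using connected_induction_simple[of "{0..(1::real)}" 0 1 Q] Q0 loc by auto
  then have "max_face P' c1 = {w}" using c1 by (simp add: Q_def cc_def)
  then show ?thesis using mf_sub by blast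
qed

theorem lemma2p2:
  fixes P P' :: "'a::euclidean_space set" and v :: 'a
  assumes "polytope P" and "polytope P'"
    and "inscribed_origin P" and "inscribed_origin P'"
    and "normal_fan P = normal_fan P'"
    and "v extreme_point_of P" and "v extreme_point_of P'"
    and "normal_cone P {v} = normal_cone P' {v}"
  shows "P = P'"
proof -
  obtain r1 where r1: "\<forall>x. x extreme_point_of P \<longrightarrow> norm x = r1"
    using assms(3) unfolding inscribed_origin_def by blast
  obtain r2 where r2: "\<forall>x. x extreme_point_of P' \<longrightarrow> norm x = r2"
    using assms(4) unfolding inscribed_origin_def by blast
  have "r1 = norm v" "r2 = norm v" using r1 r2 assms(6,7) by auto
  then have rP: "\<forall>x. x extreme_point_of P \<longrightarrow> norm x = norm v"
    and rP': "\<forall>x. x extreme_point_of P' \<longrightarrow> norm x = norm v" using r1 r2 by auto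
  have "{x. x extreme_point_of P} \<subseteq> P'"
    using ext_sub[OF assms(1,2) rP rP' assms(5,6,7,8)] by blast
  then have s1: "P \<subseteq> P'"
    using polytope_ne_ext(2)[OF assms(1)] polytope_imp_convex[OF assms(2)]
    by (metis hull_minimal)
  have "{x. x extreme_point_of P'} \<subseteq> P"
    using ext_sub[OF assms(2,1) rP' rP sym[OF assms(5)] assms(7,6) sym[OF assms(8)]] by blast
  then have s2: "P' \<subseteq> P"
    using polytope_ne_ext(2)[OF assms(2)] polytope_imp_convex[OF assms(1)]
    by (metis hull_minimal)
  show ?thesis using s1 s2 by blast
qed

end
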